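(* Let $\varepsilon_1>0$ and $0<k<1$. Then there exists $\alpha_0>0$ such that for every $\alpha$ with $|\alpha|\le\alpha_0$ and every $r>0$ there exists a $C^1$ area-preserving diffeomorphism $h:\mathbb{R}^2\to\mathbb{R}^2$ such that: (i) $|z|\ge r\Rightarrow h(z)=z$; (ii) $|z|\le\sqrt{k}\,r\Rightarrow h(z)=R_\alpha(z)$; (iii) $|h(z)|=|z|$ for all $z$; (iv) $|h(z)-z|\le\alpha r$ for all $z$; (v) $\|Dh_z-I\|\le\varepsilon_1$ for all $z$.
   Context: $R_\theta=\begin{pmatrix}\cos\theta&-\sin\theta\\ \sin\theta&\cos\theta\end{pmatrix}$ is the rotation of angle $\theta$; $|\cdot|$ is the Euclidean norm on $\mathbb{R}^2$. *)

theory Defs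
  imports "HOL-Analysis.Analysis"
begin

definition rot :: "real \<Rightarrow> real^2^2" where
  "rot \<theta> = vector [vector [cos \<theta>, - sin \<theta>], vector [sin \<theta>, cos \<theta>]]"

definition C1_map :: "(real^2 \<Rightarrow> real^2) \<Rightarrow> bool" where
  "C1_map f \<longleftrightarrow> (\<exists>D. (\<forall>z. (f has_derivative D z) (at z))
                      \<and> continuous_on UNIV (\<lambda>z. matrix (D z)))"

definition C1_diffeo :: "(real^2 \<Rightarrow> real^2) \<Rightarrow> bool" where
  "C1_diffeo h \<longleftrightarrow> C1_map h \<and>
     (\<exists>g. C1_map g \<and> (\<forall>z. g (h z) = z) \<and> (\<forall>z. h (g z) = z))"

definition area_preserving :: "(real^2 \<Rightarrow> real^2) \<Rightarrow> bool" where
  "area_preserving h \<longleftrightarrow> h \<in> borel_measurable borel \<and> distr lborel lborel h = lborel"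

end

theory Submission
  imports Defs
begin
definition jrot :: "real^2 \<Rightarrow> real^2" where "jrot z = vector [- z$2, z$1]"
lemma jrot_comp[simp]: "jrot z $ 1 = - z$2" "jrot z $ 2 = z$1" by (simp_all add: jrot_def)
lemma inner2: "(x::real^2) \<bullet> y = x$1*y$1 + x$2*y$2"
  by (simp add: inner_vec_def sum_2)
lemma jrot_lin: "bounded_linear jrot"
  apply (rule linear_conv_bounded_linear[THEN iffD1])
  apply (rule linearI) by (auto simp: vec_eq_iff forall_2)
definition tw :: "(real \<Rightarrow> real) \<Rightarrow> real^2 \<Rightarrow> real^2" where
 "tw f z = cos (f (z\<bullet>z)) *\<^sub>R z + sin (f (z\<bullet>z)) *\<^sub>R jrot z"
definition Dtw :: "(real \<Rightarrow> real) \<Rightarrow> (real \<Rightarrow> real) \<Rightarrow> real^2 \<Rightarrow> real^2 \<Rightarrow> real^2" where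
 "Dtw f f' z v = cos (f (z\<bullet>z)) *\<^sub>R v + sin (f (z\<bullet>z)) *\<^sub>R jrot v
    + (2 * f' (z\<bullet>z) * (z\<bullet>v)) *\<^sub>R (cos (f (z\<bullet>z)) *\<^sub>R jrot z - sin (f (z\<bullet>z)) *\<^sub>R z)"
lemma jrot_lin': "linear jrot" using jrot_lin bounded_linear.linear by blast
lemma tw_deriv: assumes "\<And>s. (f has_real_derivative f' s) (at s)"
  shows "(tw f has_derivative Dtw f f' z) (at z)"
proof -
  have th: "((\<lambda>x. f (x\<bullet>x)) has_derivative (\<lambda>v. (z\<bullet>v + v\<bullet>z) * f' (z\<bullet>z))) (at z)"
    by (rule DERIV_compose_FDERIV[OF assms]) (auto intro!: derivative_eq_intros)
  show ?thesis
  unfolding tw_def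
  apply (rule has_derivative_eq_rhs)
   apply (rule derivative_eq_intros th jrot_lin[THEN bounded_linear.has_derivative] has_derivative_ident refl)+
  apply (rule ext)
  apply (simp add: Dtw_def algebra_simps inner_commute linear_cmul[OF jrot_lin'] linear_add[OF jrot_lin'] )
  done
qed

lemma jrot_scale: "jrot (a *\<^sub>R v) = a *\<^sub>R jrot v" and jrot_add: "jrot (v + w) = jrot v + jrot w"
  and jrot_diff: "jrot (v - w) = jrot v - jrot w"
  and jrot_jrot: "jrot (jrot v) = - v"
  by (auto simp: vec_eq_iff forall_2)
lemma jrot_inner: "jrot v \<bullet> jrot w = v \<bullet> w" "v \<bullet> jrot v = 0" "jrot v \<bullet> v = 0"
  by (auto simp: inner2 algebra_simps)
lemma jrot_norm: "norm (jrot v) = norm v"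
  by (simp add: norm_eq_sqrt_inner jrot_inner)

lemma rot_eq: "rot a *v z = cos a *\<^sub>R z + sin a *\<^sub>R jrot z"
  by (simp add: vec_eq_iff forall_2 rot_def matrix_vector_mult_def sum_2)

lemma cs_inner: "(c *\<^sub>R v + s *\<^sub>R jrot v) \<bullet> (c *\<^sub>R v + s *\<^sub>R jrot v) = (c^2 + s^2) * (v \<bullet> v)"
  by (simp add: inner_add_left inner_add_right jrot_inner inner_commute[of "jrot v" v] power2_eq_square algebra_simps)

lemma tw_inner: "tw f z \<bullet> tw f z = z \<bullet> z"
  unfolding tw_def cs_inner by simp

lemma tw_norm: "norm (tw f z) = norm z"
  by (simp add: norm_eq_sqrt_inner tw_inner)

lemma tw_inv: "tw (\<lambda>s. - f s) (tw f z) = z"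
proof -
  let ?c = "cos (f (z\<bullet>z))" and ?s = "sin (f (z\<bullet>z))"
  have "tw (\<lambda>s. - f s) (tw f z) = ?c *\<^sub>R (?c *\<^sub>R z + ?s *\<^sub>R jrot z) - ?s *\<^sub>R jrot (?c *\<^sub>R z + ?s *\<^sub>R jrot z)"
    unfolding tw_def[of "\<lambda>s. - f s" "tw f z"] tw_inner by (simp add: tw_def)
  also have "\<dots> = (?c^2 + ?s^2) *\<^sub>R z"
    by (simp add: jrot_add jrot_scale jrot_jrot algebra_simps power2_eq_square scaleR_add_left[symmetric])
  finally show ?thesis by simp
qed

lemma cos_bound: "2 - 2 * cos (t::real) \<le> t^2"
proof -
  have "cos t = 1 - 2 * sin (t/2) ^ 2" using cos_double_sin[of "t/2"] by simp
  moreover have "sin (t/2)^2 \<le> (t/2)^2"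
    using abs_sin_x_le_abs_x[of "t/2"] by (metis abs_ge_zero power2_abs power_mono)
  ultimately show ?thesis by (simp add: power_divide)
qed

lemma rot_minus_bound: "norm ((cos t - 1) *\<^sub>R v + sin t *\<^sub>R jrot v) \<le> \<bar>t\<bar> * norm v"
proof -
  have "norm ((cos t - 1) *\<^sub>R v + sin t *\<^sub>R jrot v)^2 = ((cos t - 1)^2 + (sin t)^2) * (v \<bullet> v)"
    by (simp add: power2_norm_eq_inner cs_inner)
  also have "\<dots> = (2 - 2 * cos t) * (norm v)^2"
    by (simp add: power2_norm_eq_inner power2_diff algebra_simps)
  also have "\<dots> \<le> (\<bar>t\<bar> * norm v)^2"
    using cos_bound[of t] by (simp add: power_mult_distrib mult_right_mono)
  finally show ?thesis
    by (meson abs_ge_zero mult_nonneg_nonneg norm_ge_zero power2_le_imp_le)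
qed

lemma tw_minus_bound: "norm (tw f z - z) \<le> \<bar>f (z\<bullet>z)\<bar> * norm z"
proof -
  have "tw f z - z = (cos (f (z\<bullet>z)) - 1) *\<^sub>R z + sin (f (z\<bullet>z)) *\<^sub>R jrot z"
    by (simp add: tw_def algebra_simps)
  then show ?thesis using rot_minus_bound by simp
qed

lemma Dtw_minus_bound: "norm (Dtw f f' z v - v) \<le> (\<bar>f (z\<bullet>z)\<bar> + 2 * \<bar>f' (z\<bullet>z)\<bar> * (z\<bullet>z)) * norm v"
proof -
  let ?c = "cos (f (z\<bullet>z))" and ?s = "sin (f (z\<bullet>z))"
  have w: "?c *\<^sub>R jrot z - ?s *\<^sub>R z = jrot (tw f z)"
    by (simp add: tw_def jrot_add jrot_scale jrot_jrot)
  have e: "Dtw f f' z v - v = ((?c - 1) *\<^sub>R v + ?s *\<^sub>R jrot v) + (2 * f' (z\<bullet>z) * (z\<bullet>v)) *\<^sub>R jrot (tw f z)"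
    by (simp add: Dtw_def w algebra_simps)
  have "norm (Dtw f f' z v - v) \<le> norm ((?c - 1) *\<^sub>R v + ?s *\<^sub>R jrot v) + norm ((2 * f' (z\<bullet>z) * (z\<bullet>v)) *\<^sub>R jrot (tw f z))"
    unfolding e by (rule norm_triangle_ineq)
  also have "norm ((2 * f' (z\<bullet>z) * (z\<bullet>v)) *\<^sub>R jrot (tw f z)) = 2 * \<bar>f' (z\<bullet>z)\<bar> * \<bar>z\<bullet>v\<bar> * norm z"
    by (simp add: jrot_norm tw_norm abs_mult)
  also have "\<dots> \<le> 2 * \<bar>f' (z\<bullet>z)\<bar> * (norm z * norm v) * norm z"
    by (intro mult_right_mono mult_left_mono Cauchy_Schwarz_ineq2) auto
  also have "\<dots> = 2 * \<bar>f' (z\<bullet>z)\<bar> * (z\<bullet>z) * norm v"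
    by (simp add: dot_square_norm power2_eq_square)
  finally show ?thesis using rot_minus_bound[of "f (z\<bullet>z)" v] by (simp add: algebra_simps)
qed

lemma det_alg: fixes c s k x y :: real assumes "c^2 + s^2 = 1"
  shows "(c + k * x * (- (c * y) - s * x)) * (c + k * y * (c * x - s * y)) -
     (k * y * (- (c * y) - s * x) - s) * (s + k * x * (c * x - s * y)) = 1"
proof -
  have "(c + k * x * (- (c * y) - s * x)) * (c + k * y * (c * x - s * y)) -
     (k * y * (- (c * y) - s * x) - s) * (s + k * x * (c * x - s * y)) = (c^2 + s^2) + k * (c^2 + s^2) * 0"
    by (simp add: algebra_simps power2_eq_square)
  then show ?thesis using assms by simp
qed

lemma Dtw_det: "det (matrix (Dtw f f' z)) = 1"
proof -
  have cs: "cos (f (z\<bullet>z))^2 + sin (f (z\<bullet>z))^2 = 1" by simp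
  show ?thesis
  apply (simp add: det_2 matrix_def Dtw_def inner2 axis_def)
  using det_alg[OF cs, of "2 * f' (z\<bullet>z)" "z$1" "z$2"] by (simp add: inner2 mult.assoc)

qed


lemma cont_comp_UNIV: "continuous_on UNIV f \<Longrightarrow> continuous_on S g \<Longrightarrow> continuous_on S (\<lambda>x. f (g x))"
  using continuous_on_compose2 by blast

lemma deriv_cont: assumes "\<And>s. (f has_real_derivative f' s) (at s)" shows "continuous_on UNIV f"
  by (intro continuous_at_imp_continuous_on ballI DERIV_isCont[OF assms])

lemma Dtw_cont: assumes "\<And>s. (f has_real_derivative f' s) (at s)" "continuous_on UNIV f'"
  shows "continuous_on UNIV (\<lambda>z. matrix (Dtw f f' z))"
proof -
  have cf: "continuous_on UNIV (\<lambda>x::real^2. f (x\<bullet>x))"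
    by (rule cont_comp_UNIV[OF deriv_cont[OF assms(1)]]) (intro continuous_intros)
  have cf': "continuous_on UNIV (\<lambda>x::real^2. f' (x\<bullet>x))"
    by (rule cont_comp_UNIV[OF assms(2)]) (intro continuous_intros)
  show ?thesis
  unfolding matrix_def Dtw_def
  by (intro continuous_intros cf cf' jrot_lin[THEN linear_continuous_on])
qed

lemma tw_C1: assumes "\<And>s. (f has_real_derivative f' s) (at s)" "continuous_on UNIV f'"
  shows "C1_map (tw f)"
  unfolding C1_map_def using tw_deriv[OF assms(1)] Dtw_cont[OF assms] by blast

lemma tw_diffeo: assumes "\<And>s. (f has_real_derivative f' s) (at s)" "continuous_on UNIV f'"
  shows "C1_diffeo (tw f)"
proof -
  have d: "\<And>s. ((\<lambda>s. - f s) has_real_derivative - f' s) (at s)"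
    using assms(1) by (auto intro!: derivative_eq_intros)
  have c: "continuous_on UNIV (\<lambda>s. - f' s)" using assms(2) by (intro continuous_intros)
  have "tw f (tw (\<lambda>s. - f s) z) = z" for z
    using tw_inv[of "\<lambda>s. - f s" z] by simp
  then show ?thesis unfolding C1_diffeo_def
    using tw_C1[OF assms] tw_C1[OF d c] tw_inv by blast
qed

lemma tw_continuous: assumes "\<And>s. (f has_real_derivative f' s) (at s)"
  shows "continuous_on UNIV (tw f)"
  using tw_deriv[OF assms] has_derivative_continuous continuous_at_imp_continuous_on by blast

lemma tw_preimage: "tw f -` A = tw (\<lambda>s. - f s) ` A"
proof -
  have "tw f (tw (\<lambda>s. - f s) z) = z" for z
    using tw_inv[of "\<lambda>s. - f s" z] by simp
  note inv2 = this
  show ?thesis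
  proof (intro set_eqI iffI)
    fix x assume "x \<in> tw f -` A" then have "tw f x \<in> A" by simp
    then show "x \<in> tw (\<lambda>s. - f s) ` A" using tw_inv[of f x] by (metis image_eqI)
  next
    fix x assume "x \<in> tw (\<lambda>s. - f s) ` A"
    then obtain y where "y \<in> A" "x = tw (\<lambda>s. - f s) y" by blast
    then show "x \<in> tw f -` A" using inv2 by simp
  qed
qed



definition S0 :: "real \<Rightarrow> real" where
  "S0 t = (if t \<le> 0 then 0 else if t \<le> 1 then 3*t^2 - 2*t^3 else 1)"
definition S0' :: "real \<Rightarrow> real" where
  "S0' t = 6 * max 0 (min 1 t) * (1 - max 0 (min 1 t))"

lemma glue:
  assumes "(f has_real_derivative D) (at x within {..x})" "(f has_real_derivative D) (at x within {x..})"
  shows "(f has_real_derivative D) (at x)"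
proof -
  have "{..x} \<union> {x..} = (UNIV :: real set)" by auto
  then have "at x = sup (at x within {..x}) (at x within {x..})"
    by (metis at_within_union)
  then show ?thesis using assms unfolding has_field_derivative_iff
    by (simp add: filterlim_sup)
qed

lemma S0_deriv: "(S0 has_real_derivative S0' t) (at t)"
proof -
  have P: "((\<lambda>t. 3*t^2 - 2*t^3) has_real_derivative 6*t - 6*t^2) (at t within S)" for t :: real and S
    by (auto intro!: derivative_eq_intros simp: power2_eq_square)
  consider "t < 0" | "t = 0" | "0 < t" "t < 1" | "t = 1" | "t > 1" by linarith
  then show ?thesis
  proof cases
    case 1
    have "((\<lambda>_. 0) has_real_derivative 0) (at t)" by simp
    then have "(S0 has_real_derivative 0) (at t)"
      apply (rule has_field_derivative_transform_within_open[where S="{..<0}"])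
      using 1 by (auto simp: S0_def)
    then show ?thesis using 1 by (simp add: S0'_def)
  next
    case 2
    have l: "(S0 has_real_derivative 0) (at 0 within {..0})"
      apply (rule has_field_derivative_transform_within[where d=1 and f="\<lambda>_. 0"])
      by (auto simp: S0_def)
    have r: "(S0 has_real_derivative 0) (at 0 within {0..})"
      apply (rule has_field_derivative_transform_within[where d=1 and f="\<lambda>t. 3*t^2 - 2*t^3"])
      using P[of 0 "{0..}"] by (auto simp: S0_def dist_real_def)
    show ?thesis using glue[OF l r] 2 by (simp add: S0'_def)
  next
    case 3
    have "(S0 has_real_derivative 6*t - 6*t^2) (at t)"
      apply (rule has_field_derivative_transform_within_open[where S="{0<..<1}" and f="\<lambda>t. 3*t^2 - 2*t^3"])
      using 3 P[of t UNIV] by (auto simp: S0_def)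
    then show ?thesis using 3 by (simp add: S0'_def algebra_simps power2_eq_square)
  next
    case 4
    have l: "(S0 has_real_derivative 0) (at 1 within {..1})"
      apply (rule has_field_derivative_transform_within[where d=1 and f="\<lambda>t. 3*t^2 - 2*t^3"])
      using P[of 1 "{..1}"] by (auto simp: S0_def dist_real_def)
    have r: "(S0 has_real_derivative 0) (at 1 within {1..})"
      apply (rule has_field_derivative_transform_within[where d=1 and f="\<lambda>_. 1"])
      by (auto simp: S0_def)
    show ?thesis using glue[OF l r] 4 by (simp add: S0'_def)
  next
    case 5
    have "((\<lambda>_. 1) has_real_derivative 0) (at t)" by simp
    then have "(S0 has_real_derivative 0) (at t)"
      apply (rule has_field_derivative_transform_within_open[where S="{1<..}"])
      using 5 by (auto simp: S0_def)
    then show ?thesis using 5 by (simp add: S0'_def)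
  qed
qed

lemma S0'_cont: "continuous_on UNIV S0'"
  unfolding S0'_def by (intro continuous_intros)

lemma S0_le0: "t \<le> 0 \<Longrightarrow> S0 t = 0" and S0_ge1: "t \<ge> 1 \<Longrightarrow> S0 t = 1"
  by (auto simp: S0_def)

lemma S0_range: "0 \<le> S0 t \<and> S0 t \<le> 1"
proof (cases "0 < t \<and> t \<le> 1")
  case True
  have a: "3*t^2 - 2*t^3 = t^2 * (3 - 2*t)" by (simp add: algebra_simps power2_eq_square power3_eq_cube)
  have b: "1 - (3*t^2 - 2*t^3) = (1-t)^2 * (1 + 2*t)" by (simp add: algebra_simps power2_eq_square power3_eq_cube)
  have n1: "0 \<le> t^2 * (3 - 2*t)" using True by simp
  have n2: "0 \<le> (1-t)^2 * (1 + 2*t)" using True by simp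
  have "0 \<le> 3*t^2 - 2*t^3" "3*t^2 - 2*t^3 \<le> 1" using a b n1 n2 by linarith+
  then show ?thesis using True by (simp add: S0_def)
qed (auto simp: S0_def)

lemma S0'_bound: "t \<ge> 0 \<Longrightarrow> 0 < k \<Longrightarrow> k < 1 \<Longrightarrow> 0 \<le> S0' ((t - k)/(1-k)) * t \<and> S0' ((t - k)/(1-k)) * t \<le> 6"
proof -
  assume t: "t \<ge> 0" and k: "0 < k" "k < 1"
  let ?u = "(t - k)/(1-k)"
  let ?m = "max 0 (min 1 ?u)"
  have m: "0 \<le> ?m" "?m \<le> 1" by auto
  have s0: "0 \<le> S0' ?u" "S0' ?u \<le> 6" unfolding S0'_def using m
    by (auto intro!: mult_nonneg_nonneg) (smt (verit) mult_left_le mult_nonneg_nonneg)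
  show ?thesis
  proof (cases "t < 1")
    case True
    then show ?thesis using s0 t by (simp add: mult_le_one) (smt (verit) mult_left_le)
  next
    case False
    then have "?u \<ge> 1" using k by (simp add: field_simps)
    then have "S0' ?u = 0" by (simp add: S0'_def)
    then show ?thesis by simp
  qed
qed

lemma tw_inv2: "tw f (tw (\<lambda>s. - f s) z) = z"
  using tw_inv[of "\<lambda>s. - f s" z] by simp
lemma tw_area: assumes "\<And>s. (f has_real_derivative f' s) (at s)"
  shows "area_preserving (tw f)"
proof -
  have d: "\<And>s. ((\<lambda>s. - f s) has_real_derivative - f' s) (at s)"
    using assms(1) by (auto intro!: derivative_eq_intros)
  have meas: "tw f \<in> borel_measurable borel"
    by (rule borel_measurable_continuous_onI[OF tw_continuous[OF assms]])
  have "lborel = distr lborel lborel (tw f)"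
  proof (rule lborel_eqI)
    fix l u :: "real^2" assume lu: "\<And>b. b \<in> Basis \<Longrightarrow> l \<bullet> b \<le> u \<bullet> b"
    let ?A = "tw (\<lambda>s. - f s) ` box l u"
    have inj: "inj_on (tw (\<lambda>s. - f s)) (box l u)"
      by (rule inj_on_inverseI[where g="tw f"]) (rule tw_inv2)
    have "((\<lambda>x. \<bar>det (matrix (Dtw (\<lambda>s. - f s) (\<lambda>s. - f' s) x))\<bar>) has_integral measure lborel (cbox l u)) (box l u)"
      unfolding Dtw_det has_integral_open_interval using has_integral_const[of "1::real" l u] by simp
    note I = this
    have der: "\<And>x. x \<in> box l u \<Longrightarrow> (tw (\<lambda>s. - f s) has_derivative Dtw (\<lambda>s. - f s) (\<lambda>s. - f' s) x) (at x within box l u)"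
      using tw_deriv[OF d] has_derivative_at_withinI by blast
    have A: "?A \<in> lmeasurable \<and> measure lebesgue ?A = measure lborel (cbox l u)"
      by (rule has_measure_differentiable_image[OF _ der inj, THEN iffD2]) (simp_all add: I)
    have "open (tw f -` box l u)"
      using tw_continuous[OF assms] by (intro open_vimage) auto
    then have Ab: "?A \<in> sets borel" unfolding tw_preimage by simp
    have "emeasure (distr lborel lborel (tw f)) (box l u) = emeasure lborel ?A"
      using meas by (subst emeasure_distr) (auto simp: tw_preimage)
    also have "\<dots> = emeasure lebesgue ?A" using Ab by simp
    also have "\<dots> = measure lebesgue ?A" using A by (intro emeasure_eq_measure2) blast
    also have "\<dots> = measure lborel (cbox l u)" using A by simp
    also have "\<dots> = (\<Prod>b\<in>Basis. (u - l) \<bullet> b)" using lu by (simp add: content_cbox inner_diff_left)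
    finally show "emeasure (distr lborel lborel (tw f)) (box l u) = (\<Prod>b\<in>Basis. (u - l) \<bullet> b)" .
  qed simp
  then show ?thesis unfolding area_preserving_def using meas by simp
qed


theorem mainTheorem10:
  fixes \<epsilon>1 k :: real
  assumes "\<epsilon>1 > 0" and "0 < k" and "k < 1"
  shows "\<exists>\<alpha>0>0. \<forall>\<alpha> r. \<bar>\<alpha>\<bar> \<le> \<alpha>0 \<and> r > 0 \<longrightarrow>
           (\<exists>h :: real^2 \<Rightarrow> real^2. C1_diffeo h \<and> area_preserving h \<and>
              (\<forall>z. norm z \<ge> r \<longrightarrow> h z = z) \<and>
              (\<forall>z. norm z \<le> sqrt k * r \<longrightarrow> h z = rot \<alpha> *v z) \<and>
              (\<forall>z. norm (h z) = norm z) \<and>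
              (\<forall>z. norm (h z - z) \<le> \<bar>\<alpha>\<bar> * r) \<and>
              (\<forall>z. onorm (\<lambda>v. frechet_derivative h (at z) v - v) \<le> \<epsilon>1))"
proof -
  define M where "M = 1 + 12/(1-k)"
  have "12/(1-k) > 0" using assms by (intro divide_pos_pos) auto
  then have M: "M > 0" unfolding M_def by linarith
  show ?thesis
  proof (intro exI[of _ "\<epsilon>1/M"] conjI allI impI)
    show "\<epsilon>1/M > 0" using assms M by simp
    fix \<alpha> r :: real assume H: "\<bar>\<alpha>\<bar> \<le> \<epsilon>1/M \<and> r > 0"
    then have r: "r > 0" and aM: "\<bar>\<alpha>\<bar> * M \<le> \<epsilon>1" using M by (auto simp: field_simps)
    define u where "u s = (s / r^2 - k)/(1-k)" for s
    define f where "f s = \<alpha> * (1 - S0 (u s))" for s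
    define f' where "f' s = - \<alpha> * (S0' (u s) * (1 / (r^2 * (1-k))))" for s
    have ud: "(u has_real_derivative 1 / (r^2 * (1-k))) (at s)" for s
    proof -
      have "u = (\<lambda>s. s * (1/(r^2*(1-k))) - k/(1-k))"
        by (intro ext) (simp add: u_def diff_divide_distrib)
      then show ?thesis using assms r by (auto intro!: derivative_eq_intros)
    qed
    have fd: "(f has_real_derivative f' s) (at s)" for s
    proof -
      have "((\<lambda>s. S0 (u s)) has_real_derivative S0' (u s) * (1 / (r^2 * (1-k)))) (at s)"
        by (rule DERIV_chain2[OF S0_deriv ud])
      then show ?thesis unfolding f_def f'_def
        by (auto intro!: derivative_eq_intros)
    qed
    have uc: "continuous_on UNIV u" unfolding u_def using assms r by (intro continuous_intros) auto
    have fc: "continuous_on UNIV f'"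
    proof -
      have "continuous_on UNIV (\<lambda>s. S0' (u s))"
        by (rule cont_comp_UNIV[OF S0'_cont uc])
      then show ?thesis unfolding f'_def by (intro continuous_intros)
    qed
    have fb: "\<bar>f s\<bar> \<le> \<bar>\<alpha>\<bar>" for s
      using S0_range[of "u s"] by (simp add: f_def abs_mult mult_left_le)
    have zz: "z \<bullet> z = (norm z)^2" for z :: "real^2" by (simp add: power2_norm_eq_inner)
    have outer: "tw f z = z" if "norm z \<ge> r" for z
    proof -
      have "r^2 \<le> z \<bullet> z" using that r zz by (simp add: power_mono)
      then have "1 \<le> u (z\<bullet>z)" using r assms by (simp add: u_def field_simps)
      then have "f (z\<bullet>z) = 0" by (simp add: f_def S0_ge1)
      then show ?thesis by (simp add: tw_def)
    qed
    show "\<exists>h :: real^2 \<Rightarrow> real^2. C1_diffeo h \<and> area_preserving h \<and>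
              (\<forall>z. norm z \<ge> r \<longrightarrow> h z = z) \<and>
              (\<forall>z. norm z \<le> sqrt k * r \<longrightarrow> h z = rot \<alpha> *v z) \<and>
              (\<forall>z. norm (h z) = norm z) \<and>
              (\<forall>z. norm (h z - z) \<le> \<bar>\<alpha>\<bar> * r) \<and>
              (\<forall>z. onorm (\<lambda>v. frechet_derivative h (at z) v - v) \<le> \<epsilon>1)"
    proof (intro exI[of _ "tw f"] conjI allI impI)
      show "C1_diffeo (tw f)" by (rule tw_diffeo[OF fd fc])
      show "area_preserving (tw f)" by (rule tw_area[OF fd])
      show "tw f z = z" if "norm z \<ge> r" for z using outer that by blast
      show "norm (tw f z) = norm z" for z by (rule tw_norm)
      show "tw f z = rot \<alpha> *v z" if "norm z \<le> sqrt k * r" for z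
      proof -
        have "(norm z)^2 \<le> (sqrt k * r)^2" using that by (simp add: power_mono)
        then have "z \<bullet> z \<le> k * r^2" using assms by (simp add: zz power_mult_distrib)
        then have "u (z\<bullet>z) \<le> 0" using r assms by (simp add: u_def field_simps)
        then have "f (z\<bullet>z) = \<alpha>" by (simp add: f_def S0_le0)
        then show ?thesis by (simp add: tw_def rot_eq)
      qed
      show "norm (tw f z - z) \<le> \<bar>\<alpha>\<bar> * r" for z
      proof (cases "norm z \<ge> r")
        case True then show ?thesis using outer r by simp
      next
        case False
        have "norm (tw f z - z) \<le> \<bar>f (z\<bullet>z)\<bar> * norm z" by (rule tw_minus_bound)
        also have "\<dots> \<le> \<bar>\<alpha>\<bar> * r" using False fb by (intro mult_mono) auto
        finally show ?thesis .
      qed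
      show "onorm (\<lambda>v. frechet_derivative (tw f) (at z) v - v) \<le> \<epsilon>1" for z
      proof -
        have fe: "frechet_derivative (tw f) (at z) = Dtw f f' z"
          using frechet_derivative_at[OF tw_deriv[OF fd]] by simp
        let ?s = "z \<bullet> z"
        have s0: "?s \<ge> 0" by simp
        have sp: "0 \<le> S0' t" for t
        proof -
          have "0 \<le> max 0 (min 1 t)" "0 \<le> 1 - max 0 (min 1 t)" by auto
          then show ?thesis unfolding S0'_def by simp
        qed
        have b6: "0 \<le> S0' (u ?s) * (?s / r^2) \<and> S0' (u ?s) * (?s / r^2) \<le> 6"
          using S0'_bound[of "?s / r^2" k] assms s0 r unfolding u_def by simp
        have "2 * \<bar>f' ?s\<bar> * ?s = 2 * \<bar>\<alpha>\<bar> * (S0' (u ?s) * (?s / r^2)) / (1 - k)"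
          using b6 assms r sp[of "u ?s"] by (simp add: f'_def abs_mult field_simps)
        also have "\<dots> \<le> 2 * \<bar>\<alpha>\<bar> * 6 / (1 - k)"
          using b6 assms by (intro divide_right_mono mult_left_mono) auto
        finally have "\<bar>f ?s\<bar> + 2 * \<bar>f' ?s\<bar> * ?s \<le> \<bar>\<alpha>\<bar> * M"
          using fb[of ?s] by (simp add: M_def field_simps)
        then have "\<bar>f ?s\<bar> + 2 * \<bar>f' ?s\<bar> * ?s \<le> \<epsilon>1" using aM by linarith
        then have "norm (Dtw f f' z v - v) \<le> \<epsilon>1 * norm v" for v
          using Dtw_minus_bound[of f f' z v] by (meson mult_right_mono norm_ge_zero order_trans)
        then show ?thesis unfolding fe by (intro onorm_le)
      qed
    qed
  qed
qed

end
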